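(* For every $k\ge1$ one has the following equalities of row vectors (of length $k+1$) of power series in $t$: $$\Big(\sum_{n\ge0}\#_{\mathcal B}\{(0,0)\xrightarrow{n}(k-i,i)\}t^n\Big)_{0\le i\le k}=t^k\,B_2F_2B_3F_3\cdots B_{k+1}F_{k+1},$$ $$\Big(\sum_{n\ge0}\#_{\mathcal D}\{(0,0)\xrightarrow{n}(k-i,i)\}t^n\Big)_{0\le i\le k}=t^k\,D_2F_2D_3F_3\cdots D_{k+1}F_{k+1}.$$
   Context: Let $\mathbb N=\{0,1,2,\dots\}$, $\mathcal B=\{(-1,1),(0,1),(1,0),(1,-1)\}$, $\mathcal D=\{(-1,1),(0,1),(1,-1)\}$. For a step set $\mathcal S$, $\#_{\mathcal S}\{(0,0)\xrightarrow{n}(i,j)\}$ is the number of sequences $p_0=(0,0),p_1,\dots,p_n=(i,j)$ of points of $\mathbb N^2$ with $p_m-p_{m-1}\in\mathcal S$. For $n\ge2$, $F_n\in\mathcal M_{n,n}(\mathbb R(t))$ is the inverse of the $n\times n$ tridiagonal matrix with all diagonal entries equal to $1$ and all entries immediately above and below the diagonal equal to $-t$ (other entries $0$); its entries are rational functions, regular at $t=0$, identified with their power series expansions in $t$. For $n\ge2$, $D_n\in\mathcal M_{n-1,n}(\mathbb R)$ is the matrix with entries $(D_n)_{r,r+1}=1$ for $1\le r\le n-1$ and all other entries $0$, and $B_n\in\mathcal M_{n-1,n}(\mathbb R)$ is the matrix with entries $(B_n)_{r,r}=(B_n)_{r,r+1}=1$ for $1\le r\le n-1$ and all other entries $0$.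 Vector and matrix rows/columns are indexed so that index $i$ (starting from $0$) corresponds to the point $(k-i,i)$. *)

theory Defs
  imports "Jordan_Normal_Form.Matrix" "HOL-Computational_Algebra.Formal_Power_Series"
begin

definition stepsB :: "(int \<times> int) set" where
  "stepsB = {(-1,1),(0,1),(1,0),(1,-1)}"

definition stepsD :: "(int \<times> int) set" where
  "stepsD = {(-1,1),(0,1),(1,-1)}"

definition num_walks :: "(int \<times> int) set \<Rightarrow> nat \<Rightarrow> nat \<times> nat \<Rightarrow> nat" where
  "num_walks S n p = card {ps :: (nat \<times> nat) list.
      length ps = Suc n \<and> ps ! 0 = (0,0) \<and> ps ! n = p \<and>
      (\<forall>m<n. (int (fst (ps ! Suc m)) - int (fst (ps ! m)),
               int (snd (ps ! Suc m)) - int (snd (ps ! m))) \<in> S)}"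

definition walk_gf :: "(int \<times> int) set \<Rightarrow> nat \<times> nat \<Rightarrow> real fps" where
  "walk_gf S p = Abs_fps (\<lambda>n. of_nat (num_walks S n p))"

definition tridiag :: "nat \<Rightarrow> real fps mat" where
  "tridiag n = mat n n (\<lambda>(i,j). if i = j then 1
                           else if i = Suc j \<or> j = Suc i then - fps_X else 0)"

definition Fmat :: "nat \<Rightarrow> real fps mat" where
  "Fmat n = (THE F. F \<in> carrier_mat n n \<and> tridiag n * F = 1\<^sub>m n \<and> F * tridiag n = 1\<^sub>m n)"

text \<open>D_n and B_n, (n-1) x n matrices; with 0-based indices r = 0..n-2:
  (D_n)_{r,r+1} = 1; (B_n)_{r,r} = (B_n)_{r,r+1} = 1.\<close>
definition Dmat :: "nat \<Rightarrow> real fps mat" where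
  "Dmat n = mat (n - 1) n (\<lambda>(r,c). if c = Suc r then 1 else 0)"

definition Bmat :: "nat \<Rightarrow> real fps mat" where
  "Bmat n = mat (n - 1) n (\<lambda>(r,c). if c = r \<or> c = Suc r then 1 else 0)"

definition chain_prod :: "(nat \<Rightarrow> real fps mat) \<Rightarrow> nat \<Rightarrow> real fps mat" where
  "chain_prod G k = foldl (\<lambda>A n. A * G n * Fmat n) (1\<^sub>m 1) [2..<k+2]"

definition gf_row :: "(int \<times> int) set \<Rightarrow> nat \<Rightarrow> real fps mat" where
  "gf_row S k = mat 1 (k+1) (\<lambda>(_,i). walk_gf S (k - i, i))"

end

theory Submission
  imports Defs "Jordan_Normal_Form.Determinant"
begin


definition Wset :: "(int \<times> int) set \<Rightarrow> nat \<Rightarrow> nat \<times> nat \<Rightarrow> (nat \<times> nat) list set" where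
  "Wset S n p = {ps :: (nat \<times> nat) list.
      length ps = Suc n \<and> ps ! 0 = (0,0) \<and> ps ! n = p \<and>
      (\<forall>m<n. (int (fst (ps ! Suc m)) - int (fst (ps ! m)),
               int (snd (ps ! Suc m)) - int (snd (ps ! m))) \<in> S)}"

definition valid :: "nat \<times> nat \<Rightarrow> int \<times> int \<Rightarrow> bool" where
  "valid p s \<longleftrightarrow> int (fst p) - fst s \<ge> 0 \<and> int (snd p) - snd s \<ge> 0"

definition predp :: "nat \<times> nat \<Rightarrow> int \<times> int \<Rightarrow> nat \<times> nat" where
  "predp p s = (nat (int (fst p) - fst s), nat (int (snd p) - snd s))"

lemma Wset_0: "Wset S 0 p = (if p = (0,0) then {[(0,0)]} else {})"
  unfolding Wset_def by (auto simp: length_Suc_conv)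

lemma Wset_Suc: "Wset S (Suc n) p = (\<Union> s\<in>{s\<in>S. valid p s}. (\<lambda>ps. ps @ [p]) ` Wset S n (predp p s))"
proof (rule equalityI; rule subsetI)
  fix ps assume ps: "ps \<in> Wset S (Suc n) p"
  define q where "q = ps ! n"
  define s where "s = (int (fst p) - int (fst q), int (snd p) - int (snd q))"
  have len: "length ps = Suc (Suc n)" and p0: "ps ! 0 = (0,0)" and pl: "ps ! Suc n = p"
    and st: "\<And>m. m < Suc n \<Longrightarrow> (int (fst (ps ! Suc m)) - int (fst (ps ! m)),
               int (snd (ps ! Suc m)) - int (snd (ps ! m))) \<in> S"
    using ps unfolding Wset_def by auto
  have sS: "s \<in> S" using st[of n] pl unfolding s_def q_def by auto
  have v: "valid p s" unfolding valid_def s_def by auto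
  have pq: "predp p s = q" unfolding predp_def s_def by (cases q) auto
  have "last ps = ps ! (length ps - 1)" by (rule last_conv_nth) (use len in auto)
  then have last: "last ps = p" using len pl by simp
  have ne: "ps \<noteq> []" using len by auto
  have eq: "ps = butlast ps @ [p]" using append_butlast_last_id[OF ne] last by simp
  have nb: "\<And>m. m < Suc n \<Longrightarrow> butlast ps ! m = ps ! m" using len by (simp add: nth_butlast)
  have "butlast ps \<in> Wset S n q"
    unfolding Wset_def using len p0 st nb[of 0] nb[of n] q_def
    by (auto simp: nb)
  then show "ps \<in> (\<Union> s\<in>{s\<in>S. valid p s}. (\<lambda>ps. ps @ [p]) ` Wset S n (predp p s))"
    using sS v pq eq by blast
next
  fix ps assume "ps \<in> (\<Union> s\<in>{s\<in>S. valid p s}. (\<lambda>ps. ps @ [p]) ` Wset S n (predp p s))"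
  then obtain s qs where sS: "s \<in> S" and v: "valid p s" and qs: "qs \<in> Wset S n (predp p s)"
    and ps: "ps = qs @ [p]" by auto
  have len: "length qs = Suc n" and q0: "qs ! 0 = (0,0)" and ql: "qs ! n = predp p s"
    and st: "\<And>m. m < n \<Longrightarrow> (int (fst (qs ! Suc m)) - int (fst (qs ! m)),
               int (snd (qs ! Suc m)) - int (snd (qs ! m))) \<in> S"
    using qs unfolding Wset_def by auto
  have lastst: "(int (fst p) - int (fst (qs ! n)), int (snd p) - int (snd (qs ! n))) = s"
    using ql v unfolding predp_def valid_def by (cases s) auto
  have "\<forall>m<Suc n. (int (fst (ps ! Suc m)) - int (fst (ps ! m)),
               int (snd (ps ! Suc m)) - int (snd (ps ! m))) \<in> S"
  proof (intro allI impI)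
    fix m assume m: "m < Suc n"
    show "(int (fst (ps ! Suc m)) - int (fst (ps ! m)),
               int (snd (ps ! Suc m)) - int (snd (ps ! m))) \<in> S"
    proof (cases "m = n")
      case True then show ?thesis using lastst sS len ps by (simp add: nth_append)
    next
      case False then have "m < n" using m by auto
      then show ?thesis using st[of m] len ps by (simp add: nth_append)
    qed
  qed
  then show "ps \<in> Wset S (Suc n) p" unfolding Wset_def using len q0 ps by (auto simp: nth_append)
qed

lemma Wset_finite: "finite S \<Longrightarrow> finite (Wset S n p)"
proof (induction n arbitrary: p)
  case 0 then show ?case by (simp add: Wset_0)
next
  case (Suc n) then show ?case by (simp add: Wset_Suc)
qed

lemma num_walks_Wset: "num_walks S n p = card (Wset S n p)"
  unfolding num_walks_def Wset_def ..

lemma num_walks_Suc: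
  assumes "finite S"
  shows "num_walks S (Suc n) p = (\<Sum>s\<in>S. if valid p s then num_walks S n (predp p s) else 0)"
proof -
  have inj: "inj_on predp' {s\<in>S. valid p s}" if "predp' = predp p" for predp'
    unfolding that inj_on_def predp_def valid_def by (auto simp: prod_eq_iff)
  have "num_walks S (Suc n) p = card (\<Union> s\<in>{s\<in>S. valid p s}. (\<lambda>ps. ps @ [p]) ` Wset S n (predp p s))"
    by (simp add: num_walks_Wset Wset_Suc)
  also have "\<dots> = (\<Sum>s\<in>{s\<in>S. valid p s}. card ((\<lambda>ps. ps @ [p]) ` Wset S n (predp p s)))"
  proof (rule card_UN_disjoint)
    show "finite {s \<in> S. valid p s}" using assms by auto
    show "\<forall>s\<in>{s \<in> S. valid p s}. finite ((\<lambda>ps. ps @ [p]) ` Wset S n (predp p s))"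
      using Wset_finite[OF assms] by auto
    show "\<forall>i\<in>{s \<in> S. valid p s}. \<forall>j\<in>{s \<in> S. valid p s}. i \<noteq> j \<longrightarrow>
        (\<lambda>ps. ps @ [p]) ` Wset S n (predp p i) \<inter> (\<lambda>ps. ps @ [p]) ` Wset S n (predp p j) = {}"
    proof (intro ballI impI)
      fix i j assume i: "i \<in> {s \<in> S. valid p s}" and j: "j \<in> {s \<in> S. valid p s}" and ij: "i \<noteq> j"
      have "predp p i \<noteq> predp p j" using inj[OF refl] i j ij unfolding inj_on_def by blast
      then show "(\<lambda>ps. ps @ [p]) ` Wset S n (predp p i) \<inter> (\<lambda>ps. ps @ [p]) ` Wset S n (predp p j) = {}"
        unfolding Wset_def by auto
    qed
  qed
  also have "\<dots> = (\<Sum>s\<in>{s\<in>S. valid p s}. num_walks S n (predp p s))"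
    by (rule sum.cong[OF refl]) (simp add: num_walks_Wset card_image inj_on_def)
  also have "\<dots> = (\<Sum>s\<in>S. if valid p s then num_walks S n (predp p s) else 0)"
    using assms by (simp add: sum.inter_filter)
  finally show ?thesis .
qed

lemma num_walks_0: "num_walks S 0 p = (if p = (0,0) then 1 else 0)"
  by (simp add: num_walks_Wset Wset_0)

lemma walk_gf_rec:
  assumes "finite S"
  shows "walk_gf S p = (if p = (0,0) then 1 else 0) +
     fps_X * (\<Sum>s\<in>S. if valid p s then walk_gf S (predp p s) else 0)"
proof (rule fps_ext)
  fix n show "fps_nth (walk_gf S p) n = fps_nth ((if p = (0,0) then 1 else 0) +
     fps_X * (\<Sum>s\<in>S. if valid p s then walk_gf S (predp p s) else 0)) n"
  proof (cases n)
    case 0 then show ?thesis by (simp add: walk_gf_def num_walks_0)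
  next
    case (Suc m)
    have "fps_nth (\<Sum>s\<in>S. if valid p s then walk_gf S (predp p s) else 0) m
       = (\<Sum>s\<in>S. if valid p s then real (num_walks S m (predp p s)) else 0)"
      by (auto simp: fps_sum_nth walk_gf_def intro!: sum.cong)
    then show ?thesis using num_walks_Suc[OF assms, of m p] Suc
      by (auto simp: walk_gf_def intro!: sum.cong)
  qed
qed



interpretation c0: comm_ring_hom "\<lambda>f::real fps. fps_nth f 0"
  by unfold_locales auto

lemma tridiag_carrier[simp]: "tridiag n \<in> carrier_mat n n"
  by (simp add: tridiag_def)

lemma det_tridiag0: "fps_nth (det (tridiag n)) 0 = 1"
proof -
  have "map_mat (\<lambda>f::real fps. fps_nth f 0) (tridiag n) = 1\<^sub>m n"
    by (rule eq_matI) (auto simp: tridiag_def)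
  then have "det (map_mat (\<lambda>f::real fps. fps_nth f 0) (tridiag n)) = 1" by simp
  then show ?thesis by simp
qed

lemma smult_smult_mat': "a \<cdot>\<^sub>m (b \<cdot>\<^sub>m A) = (a * b :: 'a :: semigroup_mult) \<cdot>\<^sub>m A"
  by (rule eq_matI) (auto simp: mult.assoc)

lemma smult_one_mat': "(1::'a::monoid_mult) \<cdot>\<^sub>m A = A"
  by (rule eq_matI) auto

lemma Fmat_ex: "\<exists>!F. F \<in> carrier_mat n n \<and> tridiag n * F = 1\<^sub>m n \<and> F * tridiag n = 1\<^sub>m n"
proof
  define T where "T = tridiag n"
  define d where "d = det T"
  have d0: "fps_nth d 0 \<noteq> 0" using det_tridiag0 unfolding d_def T_def by simp
  have T: "T \<in> carrier_mat n n" unfolding T_def by simp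
  define F0 where "F0 = inverse d \<cdot>\<^sub>m adj_mat T"
  have adjC: "adj_mat T \<in> carrier_mat n n" using adj_mat[OF T] by auto
  have inv: "inverse d * d = 1" using d0 by (rule inverse_mult_eq_1)
  have "T * F0 = inverse d \<cdot>\<^sub>m (T * adj_mat T)" unfolding F0_def
    using mult_smult_distrib[OF T adjC] by simp
  also have "\<dots> = 1\<^sub>m n" using adj_mat(2)[OF T] inv unfolding d_def by (simp add: smult_smult_mat' smult_one_mat')
  finally have 1: "T * F0 = 1\<^sub>m n" .
  have "F0 * T = inverse d \<cdot>\<^sub>m (adj_mat T * T)" unfolding F0_def
    using mult_smult_assoc_mat[OF adjC T] by simp
  also have "\<dots> = 1\<^sub>m n" using adj_mat(3)[OF T] inv unfolding d_def by (simp add: smult_smult_mat' smult_one_mat')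
  finally have 2: "F0 * T = 1\<^sub>m n" .
  show "F0 \<in> carrier_mat n n \<and> tridiag n * F0 = 1\<^sub>m n \<and> F0 * tridiag n = 1\<^sub>m n"
    using 1 2 adjC unfolding F0_def T_def by simp
  fix F assume F: "F \<in> carrier_mat n n \<and> tridiag n * F = 1\<^sub>m n \<and> F * tridiag n = 1\<^sub>m n"
  have "F = F * (T * F0)" using 1 F right_mult_one_mat[of F n n] by simp
  also have "\<dots> = (F * T) * F0" using F T 1 unfolding F0_def
    by (metis assoc_mult_mat adjC smult_carrier_mat)
  also have "\<dots> = F0"
  proof -
    have FT: "F * T = 1\<^sub>m n" using F T_def by simp
    have F0C: "F0 \<in> carrier_mat n n" unfolding F0_def using adjC by simp
    show ?thesis using FT left_mult_one_mat[OF F0C] by simp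
  qed
  finally show "F = F0" .
qed

lemma Fmat_props: "Fmat n \<in> carrier_mat n n" "tridiag n * Fmat n = 1\<^sub>m n" "Fmat n * tridiag n = 1\<^sub>m n"
  using theI'[OF Fmat_ex[of n]] unfolding Fmat_def[symmetric] by auto

lemma gf_row_carrier[simp]: "gf_row S k \<in> carrier_mat 1 (Suc k)"
  by (simp add: gf_row_def)

lemma row_step:
  assumes GC: "G (k+2) \<in> carrier_mat (k+1) (k+2)"
  and ent: "\<And>i. i < k+2 \<Longrightarrow> (gf_row S (Suc k) * tridiag (k+2)) $$ (0,i) =
              (fps_X \<cdot>\<^sub>m (gf_row S k * G (k+2))) $$ (0,i)"
  shows "gf_row S (Suc k) = fps_X \<cdot>\<^sub>m (gf_row S k * G (k+2) * Fmat (k+2))"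
proof -
  define R where "R = gf_row S (Suc k)"
  define T where "T = tridiag (k+2)"
  define Y where "Y = fps_X \<cdot>\<^sub>m (gf_row S k * G (k+2))"
  have RC: "R \<in> carrier_mat 1 (k+2)" unfolding R_def using gf_row_carrier[of S "Suc k"] by simp
  have TC: "T \<in> carrier_mat (k+2) (k+2)" unfolding T_def by simp
  have FC: "Fmat (k+2) \<in> carrier_mat (k+2) (k+2)" by (rule Fmat_props)
  have YC: "Y \<in> carrier_mat 1 (k+2)" unfolding Y_def
    by (intro smult_carrier_mat mult_carrier_mat[OF gf_row_carrier]) (use GC in simp)
  have RT: "R * T = Y"
  proof (rule eq_matI)
    fix i j assume "i < dim_row Y" "j < dim_col Y"
    then have i0: "i = 0" and j: "j < k+2" using YC by auto
    show "(R * T) $$ (i, j) = Y $$ (i, j)"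
      unfolding i0 R_def T_def Y_def by (rule ent[OF j])
  qed (use RC TC YC in auto)
  have "R = R * (T * Fmat (k+2))" using Fmat_props(2)[of "k+2"] RC unfolding T_def by simp
  also have "\<dots> = (R * T) * Fmat (k+2)" using RC TC FC by simp
  also have "\<dots> = Y * Fmat (k+2)" using RT by simp
  also have "\<dots> = fps_X \<cdot>\<^sub>m (gf_row S k * G (k+2) * Fmat (k+2))"
    unfolding Y_def using mult_smult_assoc_mat[OF mult_carrier_mat[OF gf_row_carrier[of S k]] FC] GC by simp
  finally show ?thesis unfolding R_def .
qed

lemma chain_prod_Suc: "chain_prod G (Suc k) = chain_prod G k * G (k+2) * Fmat (k+2)"
  unfolding chain_prod_def by simp

lemma chain_prod_carrier:
  assumes "\<And>n. G n \<in> carrier_mat (n-1) n"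
  shows "chain_prod G k \<in> carrier_mat 1 (Suc k)"
proof (induction k)
  case 0 then show ?case by (simp add: chain_prod_def)
next
  case (Suc k)
  have "G (k+2) \<in> carrier_mat (k+1) (k+2)" using assms[of "k+2"] by simp
  then show ?case using Suc Fmat_props(1)[of "k+2"] by (simp add: chain_prod_Suc)
qed

lemma chain_ind:
  assumes GC: "\<And>n. G n \<in> carrier_mat (n-1) n"
  and base: "gf_row S 0 = 1\<^sub>m 1"
  and step: "\<And>k. gf_row S (Suc k) = fps_X \<cdot>\<^sub>m (gf_row S k * G (k+2) * Fmat (k+2))"
  shows "gf_row S k = fps_X ^ k \<cdot>\<^sub>m chain_prod G k"
proof (induction k)
  case 0 then show ?case using base by (simp add: chain_prod_def smult_one_mat')
next
  case (Suc k)
  have C: "chain_prod G k \<in> carrier_mat 1 (Suc k)" by (rule chain_prod_carrier[OF GC])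
  have G2: "G (k+2) \<in> carrier_mat (Suc k) (k+2)" using GC[of "k+2"] by simp
  have F: "Fmat (k+2) \<in> carrier_mat (k+2) (k+2)" by (rule Fmat_props)
  have "gf_row S (Suc k) = fps_X \<cdot>\<^sub>m ((fps_X ^ k \<cdot>\<^sub>m chain_prod G k) * G (k+2) * Fmat (k+2))"
    using step Suc by simp
  also have "\<dots> = fps_X \<cdot>\<^sub>m (fps_X ^ k \<cdot>\<^sub>m (chain_prod G k * G (k+2) * Fmat (k+2)))"
    using mult_smult_assoc_mat[OF C G2] mult_smult_assoc_mat[OF _ F, of "chain_prod G k * G (k+2)" 1] C G2
    by simp
  also have "\<dots> = fps_X ^ Suc k \<cdot>\<^sub>m chain_prod G (Suc k)"
    by (simp add: smult_smult_mat' chain_prod_Suc)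
  finally show ?case .
qed



lemma finite_stepsB: "finite stepsB" by (simp add: stepsB_def)
lemma finite_stepsD: "finite stepsD" by (simp add: stepsD_def)

lemma nat_h[simp]: "nat (1 + int m) = Suc m" "nat (int m + 2) = Suc (Suc m)" "nat (int m + 1) = Suc m"
  by auto

lemma recB:
  assumes "i \<le> Suc k"
  shows "walk_gf stepsB (Suc k - i, i) = fps_X * (
    (if 0 < i then walk_gf stepsB (Suc k - (i-1), i-1) else 0) +
    (if 0 < i then walk_gf stepsB (k - (i-1), i-1) else 0) +
    (if i < Suc k then walk_gf stepsB (k - i, i) else 0) +
    (if i < Suc k then walk_gf stepsB (Suc k - Suc i, Suc i) else 0))"
proof -
  have "walk_gf stepsB (Suc k - i, i) = fps_X * (\<Sum>s\<in>stepsB. if valid (Suc k - i, i) s then walk_gf stepsB (predp (Suc k - i, i) s) else 0)"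
    using walk_gf_rec[OF finite_stepsB, of "(Suc k - i, i)"] assms by auto
  also have "\<dots> = fps_X * (
    (if 0 < i then walk_gf stepsB (Suc k - (i-1), i-1) else 0) +
    (if 0 < i then walk_gf stepsB (k - (i-1), i-1) else 0) +
    (if i < Suc k then walk_gf stepsB (k - i, i) else 0) +
    (if i < Suc k then walk_gf stepsB (Suc k - Suc i, Suc i) else 0))"
    using assms
    by (cases i) (auto simp: stepsB_def valid_def predp_def nat_diff_distrib algebra_simps of_nat_diff Suc_diff_le)
  finally show ?thesis .
qed

lemma recD:
  assumes "i \<le> Suc k"
  shows "walk_gf stepsD (Suc k - i, i) = fps_X * (
    (if 0 < i then walk_gf stepsD (Suc k - (i-1), i-1) else 0) +
    (if 0 < i then walk_gf stepsD (k - (i-1), i-1) else 0) +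
    (if i < Suc k then walk_gf stepsD (Suc k - Suc i, Suc i) else 0))"
proof -
  have "walk_gf stepsD (Suc k - i, i) = fps_X * (\<Sum>s\<in>stepsD. if valid (Suc k - i, i) s then walk_gf stepsD (predp (Suc k - i, i) s) else 0)"
    using walk_gf_rec[OF finite_stepsD, of "(Suc k - i, i)"] assms by auto
  also have "\<dots> = fps_X * (
    (if 0 < i then walk_gf stepsD (Suc k - (i-1), i-1) else 0) +
    (if 0 < i then walk_gf stepsD (k - (i-1), i-1) else 0) +
    (if i < Suc k then walk_gf stepsD (Suc k - Suc i, Suc i) else 0))"
    using assms
    by (cases i) (auto simp: stepsD_def valid_def predp_def nat_diff_distrib algebra_simps of_nat_diff Suc_diff_le)
  finally show ?thesis .
qed

lemma row_mult_entry:
  assumes "R \<in> carrier_mat 1 N" "M \<in> carrier_mat N N'" "j < N'"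
  shows "(R * M) $$ (0,j) = (\<Sum>l<N. R $$ (0,l) * M $$ (l,j))"
  using assms by (simp add: scalar_prod_def atLeast0LessThan)

lemma sum_d1: "(\<Sum>j<(N::nat). if j = i then g j else 0) = (if i < N then g i else (0::'a::comm_monoid_add))"
  by (induction N) auto
lemma sum_d2: "(\<Sum>j<N. if i = Suc j then g j else 0) = (if 0 < i \<and> i - 1 < N then g (i-1) else (0::'a::comm_monoid_add))"
  by (cases i) (simp_all add: sum.delta)
lemma sum_d3: "(\<Sum>j<(N::nat). if j = Suc i then g j else 0) = (if Suc i < N then g (Suc i) else (0::'a::comm_monoid_add))"
  by (induction N) auto

lemma sum_tri:
  assumes "i < N"
  shows "(\<Sum>j<N. f j * tridiag N $$ (j,i)) = f i - (if 0 < i then fps_X * f (i-1) else 0)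
      - (if Suc i < N then fps_X * f (Suc i) else 0)"
proof -
  have "(\<Sum>j<N. f j * tridiag N $$ (j,i)) = (\<Sum>j<N. (if j = i then f j else 0)
     - (if i = Suc j then fps_X * f j else 0) - (if j = Suc i then fps_X * f j else 0))"
    by (rule sum.cong[OF refl]) (use assms in \<open>auto simp: tridiag_def\<close>)
  also have "\<dots> = f i - (if 0 < i then fps_X * f (i-1) else 0)
      - (if Suc i < N then fps_X * f (Suc i) else 0)"
    using assms by (simp add: sum_subtractf sum_d1 sum_d2 sum_d3)
  finally show ?thesis .
qed

lemma gf_row_entry: "j < Suc K \<Longrightarrow> gf_row S K $$ (0,j) = walk_gf S (K - j, j)"
  by (simp add: gf_row_def)

lemma lhs_entry:
  assumes "i < k+2"
  shows "(gf_row S (Suc k) * tridiag (k+2)) $$ (0,i) = walk_gf S (Suc k - i, i)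
     - (if 0 < i then fps_X * walk_gf S (Suc k - (i-1), i-1) else 0)
     - (if Suc i < k+2 then fps_X * walk_gf S (Suc k - Suc i, Suc i) else 0)"
proof -
  have "(gf_row S (Suc k) * tridiag (k+2)) $$ (0,i) = (\<Sum>l<k+2. gf_row S (Suc k) $$ (0,l) * tridiag (k+2) $$ (l,i))"
    by (rule row_mult_entry) (use assms gf_row_carrier[of S "Suc k"] in auto)
  also have "\<dots> = (\<Sum>l<k+2. walk_gf S (Suc k - l, l) * tridiag (k+2) $$ (l,i))"
    by (rule sum.cong[OF refl]) (simp add: gf_row_entry)
  finally show ?thesis using sum_tri[OF assms, of "\<lambda>l. walk_gf S (Suc k - l, l)"] assms by simp
qed

lemma entryB:
  assumes "i < k+2"
  shows "(gf_row stepsB (Suc k) * tridiag (k+2)) $$ (0,i) = (fps_X \<cdot>\<^sub>m (gf_row stepsB k * Bmat (k+2))) $$ (0,i)"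
proof -
  have BC: "Bmat (k+2) \<in> carrier_mat (Suc k) (k+2)" by (simp add: Bmat_def)
  have "(gf_row stepsB k * Bmat (k+2)) $$ (0,i) = (\<Sum>l<Suc k. gf_row stepsB k $$ (0,l) * Bmat (k+2) $$ (l,i))"
    by (rule row_mult_entry[OF gf_row_carrier BC]) (use assms in auto)
  also have "\<dots> = (\<Sum>l<Suc k. (if l = i then walk_gf stepsB (k - l, l) else 0) + (if i = Suc l then walk_gf stepsB (k - l, l) else 0))"
    by (rule sum.cong[OF refl]) (use assms in \<open>auto simp: gf_row_entry Bmat_def\<close>)
  also have "\<dots> = (if i < Suc k then walk_gf stepsB (k - i, i) else 0) + (if 0 < i then walk_gf stepsB (k - (i-1), i-1) else 0)"
    using assms by (simp add: sum.distrib sum_d1 sum_d2)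
  finally have R: "(gf_row stepsB k * Bmat (k+2)) $$ (0,i) = \<dots>" .
  have C: "gf_row stepsB k * Bmat (k+2) \<in> carrier_mat 1 (k+2)" using mult_carrier_mat[OF gf_row_carrier BC] by simp
  have E: "(fps_X \<cdot>\<^sub>m (gf_row stepsB k * Bmat (k+2))) $$ (0,i) = fps_X * (gf_row stepsB k * Bmat (k+2)) $$ (0,i)"
    by (rule index_smult_mat) (use C assms in auto)
  note W = recB[of i k]
  show ?thesis
    unfolding lhs_entry[OF assms] E R
    using assms W by (auto simp: algebra_simps)
qed

lemma entryD:
  assumes "i < k+2"
  shows "(gf_row stepsD (Suc k) * tridiag (k+2)) $$ (0,i) = (fps_X \<cdot>\<^sub>m (gf_row stepsD k * Dmat (k+2))) $$ (0,i)"
proof -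
  have BC: "Dmat (k+2) \<in> carrier_mat (Suc k) (k+2)" by (simp add: Dmat_def)
  have "(gf_row stepsD k * Dmat (k+2)) $$ (0,i) = (\<Sum>l<Suc k. gf_row stepsD k $$ (0,l) * Dmat (k+2) $$ (l,i))"
    by (rule row_mult_entry[OF gf_row_carrier BC]) (use assms in auto)
  also have "\<dots> = (\<Sum>l<Suc k. (if i = Suc l then walk_gf stepsD (k - l, l) else 0))"
    by (rule sum.cong[OF refl]) (use assms in \<open>auto simp: gf_row_entry Dmat_def\<close>)
  also have "\<dots> = (if 0 < i then walk_gf stepsD (k - (i-1), i-1) else 0)"
    using assms by (simp add: sum_d2)
  finally have R: "(gf_row stepsD k * Dmat (k+2)) $$ (0,i) = \<dots>" .
  have C: "gf_row stepsD k * Dmat (k+2) \<in> carrier_mat 1 (k+2)" using mult_carrier_mat[OF gf_row_carrier BC] by simp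
  have E: "(fps_X \<cdot>\<^sub>m (gf_row stepsD k * Dmat (k+2))) $$ (0,i) = fps_X * (gf_row stepsD k * Dmat (k+2)) $$ (0,i)"
    by (rule index_smult_mat) (use C assms in auto)
  note W = recD[of i k]
  show ?thesis
    unfolding lhs_entry[OF assms] E R
    using assms W by (auto simp: algebra_simps)
qed



lemma base0:
  assumes "finite S" "\<And>s. s \<in> S \<Longrightarrow> \<not> valid (0,0) s"
  shows "gf_row S 0 = 1\<^sub>m 1"
proof -
  have "walk_gf S (0,0) = 1" using walk_gf_rec[OF assms(1), of "(0,0)"] assms(2)
    by (simp add: sum.neutral)
  then show ?thesis by (intro eq_matI) (auto simp: gf_row_def)
qed

theorem proposition2p10:
  fixes k :: nat
  assumes "k \<ge> 1"
  shows "gf_row stepsB k = fps_X ^ k \<cdot>\<^sub>m chain_prod Bmat k \<and>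
         gf_row stepsD k = fps_X ^ k \<cdot>\<^sub>m chain_prod Dmat k"
proof
  show "gf_row stepsB k = fps_X ^ k \<cdot>\<^sub>m chain_prod Bmat k"
  proof (rule chain_ind)
    show "\<And>n. Bmat n \<in> carrier_mat (n - 1) n" by (simp add: Bmat_def)
    show "gf_row stepsB 0 = 1\<^sub>m 1"
      by (rule base0[OF finite_stepsB]) (auto simp: stepsB_def valid_def)
    fix k show "gf_row stepsB (Suc k) = fps_X \<cdot>\<^sub>m (gf_row stepsB k * Bmat (k + 2) * Fmat (k + 2))"
      by (rule row_step[of Bmat k stepsB, OF _ entryB]) (auto simp: Bmat_def)
  qed
  show "gf_row stepsD k = fps_X ^ k \<cdot>\<^sub>m chain_prod Dmat k"
  proof (rule chain_ind)
    show "\<And>n. Dmat n \<in> carrier_mat (n - 1) n" by (simp add: Dmat_def)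
    show "gf_row stepsD 0 = 1\<^sub>m 1"
      by (rule base0[OF finite_stepsD]) (auto simp: stepsD_def valid_def)
    fix k show "gf_row stepsD (Suc k) = fps_X \<cdot>\<^sub>m (gf_row stepsD k * Dmat (k + 2) * Fmat (k + 2))"
      by (rule row_step[of Dmat k stepsD, OF _ entryD]) (auto simp: Dmat_def)
  qed
qed


end
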